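(* Let $N\ge2$, $d=\pi(N)$, let $p_1<\dots<p_d$ be the primes up to $N$, and for $n=\prod_{j=1}^dp_j^{\kappa_j}\le N$ write $z(n)=\prod_{j=1}^dz_j^{\kappa_j}$ for $z=(z_1,\dots,z_d)\in\mathbb{T}^d$. Let $F(z)=\sum_{n=1}^Na_nz(n)$ with complex coefficients $a_n$, let $\|F\|_{L^\infty(\mathbb{T}^d)}=\sup_{z\in\mathbb{T}^d}|F(z)|$, and for $0<\lambda<1$ set \[X_\lambda=\{z\in\mathbb{T}^d:|F(z)|\ge\lambda\|F\|_{L^\infty(\mathbb{T}^d)}\}.\] Then \[\mu_d(X_\lambda)\ge\Big(\frac{1-\lambda}{\pi^2}\Big)^{\pi(N)}e^{-\sqrt N}.\]
   Context: $\mathbb{T}^d=\{(z_1,\dots,z_d):|z_j|=1\}$ is the polytorus and $\mu_d$ is the normalized product Lebesgue (Haar) measure on it; $\pi(N)$ is the number of primes $\le N$. *)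

theory Defs
  imports "HOL-Probability.Probability" "HOL-Computational_Algebra.Primes"
begin

text \<open>Primes up to N; the polytorus T^d is indexed by these primes
  (coordinate z p corresponds to z_j for p = p_j).\<close>
definition primes_upto :: "nat \<Rightarrow> nat set" where
  "primes_upto N = {p. prime p \<and> p \<le> N}"

definition circle_measure :: "complex measure" where
  "circle_measure = distr (restrict_space lborel {0..1::real}) borel (\<lambda>t. cis (2 * pi * t))"

definition torus_measure :: "nat set \<Rightarrow> (nat \<Rightarrow> complex) measure" where
  "torus_measure P = PiM P (\<lambda>_. circle_measure)"

definition torus :: "nat set \<Rightarrow> (nat \<Rightarrow> complex) set" where
  "torus P = PiE P (\<lambda>_. sphere 0 1)"

definition zmon :: "(nat \<Rightarrow> complex) \<Rightarrow> nat \<Rightarrow> complex" where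
  "zmon z n = (\<Prod>p\<in>prime_factors n. z p ^ multiplicity p n)"

definition dirichlet_poly :: "nat \<Rightarrow> (nat \<Rightarrow> complex) \<Rightarrow> (nat \<Rightarrow> complex) \<Rightarrow> complex" where
  "dirichlet_poly N a z = (\<Sum>n=1..N. a n * zmon z n)"

end

theory Submission
  imports Defs
begin

definition bh :: "nat \<Rightarrow> real" where
  "bh n = ((-1/2) gchoose n) * (-1)^n"

definition ac :: "nat \<Rightarrow> real" where
  "ac n = bh n / (2 * real n + 1)"

definition acs :: "nat \<Rightarrow> real" where
  "acs k = (if odd k then ac (k div 2) else 0)"

lemma bh_nonneg: "0 \<le> bh n"
proof -
  have "((-1/2::real) gchoose n) = (-1)^n * ((1/2 + real n - 1) gchoose n)"
    using gbinomial_minus[of "1/2::real" n] by simp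
  moreover have "0 \<le> ((1/2 + real n - 1::real) gchoose n)"
    unfolding gbinomial_prod_rev
    by (intro divide_nonneg_pos prod_nonneg) auto
  moreover have "(-1::real)^n * (-1)^n = 1" by (simp flip: power_mult_distrib)
  ultimately show ?thesis unfolding bh_def
    by (metis mult.commute mult.left_commute mult_1_right)
qed

lemma ac_nonneg: "0 \<le> ac n"
  unfolding ac_def using bh_nonneg[of n] by simp

lemma binom_series:
  fixes w :: real assumes "\<bar>w\<bar> < 1"
  shows "(\<lambda>n. bh n * w^n) sums (1 - w) powr (-1/2)"
proof -
  have "\<bar>-w\<bar> < 1" using assms by simp
  from gen_binomial_real[OF this, of "-1/2"]
  show ?thesis unfolding bh_def by (simp add: power_mult_distrib[symmetric] mult.assoc)
qed

lemma acs_sums: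
  fixes y :: real assumes "\<bar>y\<bar> < 1"
  shows "(\<lambda>k. acs k * y^k) sums (\<Sum>n. acs n * y^n)"
    and "(\<lambda>n. ac n * y^(2*n+1)) sums (\<Sum>n. acs n * y^n)"
proof -
  have "\<bar>y^2\<bar> < 1" using assms by (simp add: abs_square_less_1)
  from binom_series[OF this] have "summable (\<lambda>n. bh n * (y^2)^n)" by (rule sums_summable)
  hence "summable (\<lambda>n. norm (bh n * (y^2)^n))" using bh_nonneg by (simp add: abs_mult)
  moreover have "norm (ac n * y^(2*n+1)) \<le> norm (bh n * (y^2)^n)" for n
  proof -
    have "norm (ac n * y^(2*n+1)) = ac n * \<bar>y\<bar>^(2*n+1)" using ac_nonneg by (simp add: abs_mult power_abs)
    also have "\<dots> \<le> bh n * \<bar>y\<bar>^(2*n)"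
    proof (rule mult_mono)
      show "ac n \<le> bh n" unfolding ac_def using bh_nonneg[of n] by (simp add: divide_le_eq mult_le_cancel_left1)
      show "\<bar>y\<bar>^(2*n+1) \<le> \<bar>y\<bar>^(2*n)" using assms by (intro power_decreasing) auto
    qed (use bh_nonneg in auto)
    also have "\<dots> = norm (bh n * (y^2)^n)" using bh_nonneg by (simp add: abs_mult power_abs power_mult)
    finally show ?thesis .
  qed
  ultimately have sm: "summable (\<lambda>n. ac n * y^(2*n+1))"
    by (rule summable_comparison_test'[where N=0])
  have sm2: "(\<lambda>n. acs (2*n+1) * y^(2*n+1)) sums (\<Sum>n. ac n * y^(2*n+1))"
    using summable_sums[OF sm] by (simp add: acs_def)
  have eq: "(\<lambda>n. acs ((\<lambda>n. 2*n+1) n) * y^((\<lambda>n. 2*n+1) n)) sums c \<longleftrightarrow> (\<lambda>k. acs k * y^k) sums c" for c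
    by (rule sums_mono_reindex) (auto simp: strict_mono_def acs_def elim!: oddE)
  from sm2 eq have s1: "(\<lambda>k. acs k * y^k) sums (\<Sum>n. ac n * y^(2*n+1))" by simp
  thus "(\<lambda>k. acs k * y^k) sums (\<Sum>n. acs n * y^n)" by (simp add: sums_iff)
  from s1 have "(\<Sum>n. acs n * y^n) = (\<Sum>n. ac n * y^(2*n+1))" by (simp add: sums_iff)
  thus "(\<lambda>n. ac n * y^(2*n+1)) sums (\<Sum>n. acs n * y^n)" using sm by (simp add: summable_sums)
qed

lemma acs_deriv:
  fixes y :: real assumes "\<bar>y\<bar> < 1"
  shows "DERIV (\<lambda>y. \<Sum>n. acs n * y^n) y :> inverse (sqrt (1 - y^2))"
proof -
  define K where "K = (1 + \<bar>y\<bar>) / 2"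
  have K: "\<bar>K\<bar> < 1" "\<bar>y\<bar> < \<bar>K\<bar>" using assms by (auto simp: K_def)
  have "summable (\<lambda>n. acs n * K^n)" using acs_sums(1)[OF K(1)] by (rule sums_summable)
  from termdiffs_strong[OF this, of y] K
  have d: "DERIV (\<lambda>y. \<Sum>n. acs n * y^n) y :> (\<Sum>n. diffs acs n * y^n)" by simp
  have "\<bar>y^2\<bar> < 1" using assms by (simp add: abs_square_less_1)
  from binom_series[OF this] have bs: "(\<lambda>n. bh n * (y^2)^n) sums (1 - y^2) powr (-1/2)" .
  have eq: "(\<lambda>n. diffs acs ((\<lambda>n. 2*n) n) * y^((\<lambda>n. 2*n) n)) sums c \<longleftrightarrow> (\<lambda>k. diffs acs k * y^k) sums c" for c
    by (rule sums_mono_reindex) (auto simp: strict_mono_def acs_def diffs_def elim!: evenE)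
  have "diffs acs (2*n) * y^(2*n) = bh n * (y^2)^n" for n
  proof -
    have "(2 * real n + 1) \<noteq> 0" by simp
    hence "diffs acs (2*n) = bh n" by (simp add: diffs_def acs_def ac_def add.commute)
    thus ?thesis by (simp add: power_mult)
  qed
  with bs eq have "(\<lambda>k. diffs acs k * y^k) sums (1 - y^2) powr (-1/2)" by simp
  hence "(\<Sum>n. diffs acs n * y^n) = (1 - y^2) powr (-1/2)" by (simp add: sums_iff)
  also have "\<dots> = inverse (sqrt (1 - y^2))"
    using \<open>\<bar>y^2\<bar> < 1\<close> by (simp add: powr_minus powr_half_sqrt)
  finally show ?thesis using d by simp
qed

lemma acs_arcsin:
  fixes y :: real assumes "\<bar>y\<bar> < 1"
  shows "(\<Sum>n. acs n * y^n) = arcsin y"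
proof -
  have "\<exists>c. \<forall>x\<in>{-1<..<1::real}. (\<Sum>n. acs n * x^n) - arcsin x = c"
  proof (rule has_field_derivative_zero_constant)
    fix x :: real assume x: "x \<in> {-1<..<1}"
    hence "\<bar>x\<bar> < 1" by auto
    have "DERIV (\<lambda>x. (\<Sum>n. acs n * x^n) - arcsin x) x :> inverse (sqrt (1 - x^2)) - inverse (sqrt (1 - x^2))"
      using x by (intro derivative_intros acs_deriv[OF \<open>\<bar>x\<bar> < 1\<close>] DERIV_arcsin) auto
    thus "((\<lambda>x. (\<Sum>n. acs n * x^n) - arcsin x) has_field_derivative 0) (at x within {-1<..<1})"
      by (simp add: has_field_derivative_at_within)
  qed auto
  then obtain c where c: "\<And>x. x\<in>{-1<..<1::real} \<Longrightarrow> (\<Sum>n. acs n * x^n) - arcsin x = c" by blast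
  have "c = 0" using c[of 0] by (simp add: acs_def)
  with c[of y] assms show ?thesis by (auto simp: abs_less_iff)
qed

lemma ac_partial_le: "(\<Sum>n<K. ac n) \<le> pi/2"
proof -
  have lim: "((\<lambda>y::real. \<Sum>n<K. ac n * y^(2*n+1)) \<longlongrightarrow> (\<Sum>n<K. ac n * 1^(2*n+1))) (at_left 1)"
    by (intro tendsto_intros)
  have key: "(\<Sum>n<K. ac n * y^(2*n+1)) \<le> pi/2" if y: "y \<in> {0<..<1}" for y :: real
  proof -
    have ay: "\<bar>y\<bar> < 1" using y by auto
    have "(\<Sum>n<K. ac n * y^(2*n+1)) \<le> (\<Sum>n. ac n * y^(2*n+1))"
      using acs_sums(2)[OF ay] y ac_nonneg
      by (intro sum_le_suminf) (auto simp: sums_summable intro!: mult_nonneg_nonneg)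
    also have "\<dots> = arcsin y" using acs_sums(2)[OF ay] acs_arcsin[OF ay] by (simp add: sums_iff)
    also have "\<dots> \<le> pi/2" using y by (intro arcsin_ubound) auto
    finally show ?thesis .
  qed
  have ev: "eventually (\<lambda>y::real. (\<Sum>n<K. ac n * y^(2*n+1)) \<le> pi/2) (at_left 1)"
    by (rule eventually_mono[OF eventually_at_left_real[OF zero_less_one] key])
  have "(\<Sum>n<K. ac n * 1^(2*n+1)) \<le> pi/2"
    by (rule tendsto_le[OF _ tendsto_const lim ev]) simp
  thus ?thesis by simp
qed

lemma ac_summable: "summable ac"
  by (rule summableI_nonneg_bounded[OF ac_nonneg ac_partial_le])

lemma ac_suminf_le: "suminf ac \<le> pi/2"
  using ac_summable ac_partial_le by (intro suminf_le_const) auto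

lemma ac_sin_sums:
  fixes x :: real assumes "\<bar>x\<bar> < pi/2"
  shows "(\<lambda>n. ac n * sin x ^ (2*n+1)) sums x"
proof -
  have xs: "arcsin (sin x) = x" using assms by (intro arcsin_sin) auto
  have "sin x \<noteq> 1" using xs assms by auto
  moreover have "sin x \<noteq> -1" using xs assms by auto
  ultimately have "\<bar>sin x\<bar> < 1" using sin_le_one[of x] sin_ge_minus_one[of x] by linarith
  from acs_sums(2)[OF this] acs_arcsin[OF this] arcsin_sin[of x] assms
  show ?thesis by auto
qed


lemma sin_cis_shift: "complex_of_real (sin a) * cis b = (cis (b + a) - cis (b - a)) / (2 * \<i>)"
proof -
  have "cis (b + a) - cis (b - a) = 2 * \<i> * (complex_of_real (sin a) * cis b)"
    by (simp add: complex_eq_iff cos_add sin_add cos_diff sin_diff)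
  thus ?thesis by simp
qed

lemma sin_pow_shift: "c * complex_of_real (sin a ^ Suc m) * cis b =
   (c * complex_of_real (sin a ^ m) * cis (b + a) - c * complex_of_real (sin a ^ m) * cis (b - a)) / (2 * \<i>)"
proof -
  have "c * complex_of_real (sin a ^ Suc m) * cis b = c * complex_of_real (sin a ^ m) * (complex_of_real (sin a) * cis b)"
    by (simp add: mult_ac)
  also have "\<dots> = c * complex_of_real (sin a ^ m) * ((cis (b + a) - cis (b - a)) / (2 * \<i>))"
    by (simp only: sin_cis_shift)
  finally show ?thesis by (simp add: field_simps)
qed

lemma shift_pow:
  fixes b :: "'i \<Rightarrow> complex" and l :: "'i \<Rightarrow> real"
  assumes H: "\<And>u. norm (\<Sum>i\<in>I. b i * cis (l i * u)) \<le> M"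
  shows "norm (\<Sum>i\<in>I. b i * of_real (sin (l i * s) ^ m) * cis (l i * u)) \<le> M"
proof (induction m arbitrary: u)
  case 0
  then show ?case using H by simp
next
  case (Suc m)
  define X where "X u' = (\<Sum>i\<in>I. b i * of_real (sin (l i * s) ^ m) * cis (l i * u'))" for u'
  have "(\<Sum>i\<in>I. b i * of_real (sin (l i * s) ^ Suc m) * cis (l i * u))
     = (\<Sum>i\<in>I. (b i * of_real (sin (l i * s) ^ m) * cis (l i * (u + s))
         - b i * of_real (sin (l i * s) ^ m) * cis (l i * (u - s))) / (2 * \<i>))"
  proof (rule sum.cong[OF refl])
    fix i assume "i \<in> I"
    have e1: "l i * (u + s) = l i * u + l i * s" "l i * (u - s) = l i * u - l i * s"
      by (simp_all add: algebra_simps)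
    show "b i * of_real (sin (l i * s) ^ Suc m) * cis (l i * u) =
      (b i * of_real (sin (l i * s) ^ m) * cis (l i * (u + s))
         - b i * of_real (sin (l i * s) ^ m) * cis (l i * (u - s))) / (2 * \<i>)"
      unfolding e1 by (rule sin_pow_shift)
  qed
  also have "\<dots> = (\<Sum>i\<in>I. (b i * of_real (sin (l i * s) ^ m) * cis (l i * (u + s))
         - b i * of_real (sin (l i * s) ^ m) * cis (l i * (u - s)))) / (2 * \<i>)"
    by (rule sum_divide_distrib[symmetric])
  also have "\<dots> = (X (u + s) - X (u - s)) / (2 * \<i>)"
    by (simp only: X_def sum_subtractf)
  also have "norm \<dots> = norm (X (u + s) - X (u - s)) / 2"
    by (simp add: norm_divide norm_mult)
  also have "\<dots> \<le> (norm (X (u + s)) + norm (X (u - s))) / 2"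
    by (intro divide_right_mono norm_triangle_ineq4) auto
  also have "\<dots> \<le> (M + M) / 2"
    using Suc[of "u+s"] Suc[of "u-s"] unfolding X_def by (intro divide_right_mono add_mono) auto
  finally show ?case by simp
qed

lemma norm_sums_le:
  fixes f :: "nat \<Rightarrow> complex"
  assumes "f sums S" "\<And>n. norm (f n) \<le> g n" "summable g"
  shows "norm S \<le> suminf g"
proof -
  have sn: "summable (\<lambda>n. norm (f n))"
  proof (rule summable_comparison_test'[where N=0 and g=g])
    show "summable g" by (rule assms(3))
    fix n show "norm (norm (f n)) \<le> g n" using assms(2)[of n] by simp
  qed
  have "norm S = norm (suminf f)" using assms(1) by (simp add: sums_iff)
  also have "\<dots> \<le> (\<Sum>n. norm (f n))" by (rule summable_norm[OF sn])
  also have "\<dots> \<le> suminf g" by (rule suminf_le[OF assms(2) sn assms(3)])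
  finally show ?thesis .
qed

lemma bernstein_strict:
  fixes b :: "'i \<Rightarrow> complex" and l :: "'i \<Rightarrow> real"
  assumes fin: "finite I" and L: "L > 0" and lb: "\<And>i. i \<in> I \<Longrightarrow> \<bar>l i\<bar> < L"
    and H: "\<And>u. norm (\<Sum>i\<in>I. b i * cis (l i * u)) \<le> M"
  shows "norm (\<Sum>i\<in>I. b i * (\<i> * of_real (l i)) * cis (l i * u)) \<le> L * M"
proof -
  define s where "s = pi / (2 * L)"
  have s: "s > 0" using L by (simp add: s_def)
  have M: "M \<ge> 0" using H[of 0] norm_ge_zero order.trans by blast
  have xi: "\<bar>l i * s\<bar> < pi/2" if "i \<in> I" for i
  proof -
    have "\<bar>l i * s\<bar> = \<bar>l i\<bar> * s" using s by (simp add: abs_mult)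
    also have "\<dots> < L * s" using lb[OF that] s by (intro mult_strict_right_mono) auto
    also have "L * s = pi/2" using L by (simp add: s_def)
    finally show ?thesis .
  qed
  define f where "f n i = b i * (\<i> / of_real s) * cis (l i * u) * of_real (ac n * sin (l i * s) ^ (2*n+1))" for n i
  have si: "(\<lambda>n. f n i) sums (b i * (\<i> * of_real (l i)) * cis (l i * u))" if "i \<in> I" for i
  proof -
    have "(\<lambda>n. of_real (ac n * sin (l i * s) ^ (2*n+1))) sums (of_real (l i * s) :: complex)"
      using ac_sin_sums[OF xi[OF that]] by (subst sums_of_real_iff)
    from sums_mult[OF this, of "b i * (\<i> / of_real s) * cis (l i * u)"]
    moreover have "b i * (\<i> / of_real s) * cis (l i * u) * of_real (l i * s) = b i * (\<i> * of_real (l i)) * cis (l i * u)"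
      using s by (simp add: mult_ac)
    ultimately show ?thesis by (simp add: f_def)
  qed
  have ss: "(\<lambda>n. \<Sum>i\<in>I. f n i) sums (\<Sum>i\<in>I. b i * (\<i> * of_real (l i)) * cis (l i * u))"
    by (rule sums_sum[OF si])
  have bnd: "norm (\<Sum>i\<in>I. f n i) \<le> ac n / s * M" for n
  proof -
    have "(\<Sum>i\<in>I. f n i) = (\<i> * of_real (ac n / s)) * (\<Sum>i\<in>I. b i * of_real (sin (l i * s) ^ (2*n+1)) * cis (l i * u))"
      unfolding f_def sum_distrib_left by (intro sum.cong refl) (simp add: mult_ac)
    also have "norm \<dots> = ac n / s * norm (\<Sum>i\<in>I. b i * of_real (sin (l i * s) ^ (2*n+1)) * cis (l i * u))"
      using ac_nonneg[of n] s by (simp add: norm_mult norm_divide)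
    also have "\<dots> \<le> ac n / s * M"
      using ac_nonneg[of n] s by (intro mult_left_mono shift_pow[OF H]) auto
    finally show ?thesis .
  qed
  have sg: "summable (\<lambda>n. ac n / s * M)"
    using ac_summable by (intro summable_mult2 summable_divide)
  have "norm (\<Sum>i\<in>I. b i * (\<i> * of_real (l i)) * cis (l i * u)) \<le> (\<Sum>n. ac n / s * M)"
    by (rule norm_sums_le[OF ss bnd sg])
  also have "(\<Sum>n. ac n / s * M) = suminf ac / s * M"
  proof -
    have e: "(\<lambda>n. ac n / s * M) = (\<lambda>n. ac n * (M / s))" by (rule ext) simp
    show ?thesis unfolding e suminf_mult2[OF ac_summable, symmetric] by simp
  qed
  also have "\<dots> \<le> (pi/2) / s * M"
    using ac_suminf_le s M by (intro mult_right_mono divide_right_mono) auto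
  also have "(pi/2) / s = L" using L by (simp add: s_def)
  finally show ?thesis .
qed

lemma bernstein:
  fixes b :: "'i \<Rightarrow> complex" and l :: "'i \<Rightarrow> real"
  assumes fin: "finite I" and L: "L \<ge> 0" and lb: "\<And>i. i \<in> I \<Longrightarrow> \<bar>l i\<bar> \<le> L"
    and H: "\<And>u. norm (\<Sum>i\<in>I. b i * cis (l i * u)) \<le> M"
  shows "norm (\<Sum>i\<in>I. b i * (\<i> * of_real (l i)) * cis (l i * u)) \<le> L * M"
proof (rule field_le_epsilon)
  fix e :: real assume e: "e > 0"
  have M: "M \<ge> 0" using H[of 0] norm_ge_zero order.trans by blast
  define L' where "L' = L + e / (M + 1)"
  have L': "L' > L" using e M by (simp add: L'_def)
  have "norm (\<Sum>i\<in>I. b i * (\<i> * of_real (l i)) * cis (l i * u)) \<le> L' * M"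
    using L' L lb by (intro bernstein_strict[OF fin _ _ H]) (auto intro: le_less_trans)
  also have "L' * M = L * M + e * (M / (M + 1))" using M by (simp add: L'_def field_simps)
  also have "\<dots> \<le> L * M + e * 1" using M e by (intro add_left_mono mult_left_mono) auto
  finally show "norm (\<Sum>i\<in>I. b i * (\<i> * of_real (l i)) * cis (l i * u)) \<le> L * M + e" by simp
qed

lemma bernstein_diff:
  fixes b :: "'i \<Rightarrow> complex" and l :: "'i \<Rightarrow> real"
  assumes fin: "finite I" and L: "L \<ge> 0" and lb: "\<And>i. i \<in> I \<Longrightarrow> \<bar>l i\<bar> \<le> L"
    and H: "\<And>u. norm (\<Sum>i\<in>I. b i * cis (l i * u)) \<le> M"
  shows "norm ((\<Sum>i\<in>I. b i * cis (l i)) - (\<Sum>i\<in>I. b i)) \<le> L * M"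
proof -
  define g where "g z = (\<Sum>i\<in>I. b i * exp (\<i> * of_real (l i) * z))" for z :: complex
  define g' where "g' z = (\<Sum>i\<in>I. b i * (\<i> * of_real (l i)) * exp (\<i> * of_real (l i) * z))" for z :: complex
  have cs: "closed_segment 0 1 = complex_of_real ` {0..1}"
    by (auto simp: closed_segment_def scaleR_conv_of_real image_def)
  have "norm (g 1 - g 0) \<le> (L * M) * norm (1 - 0 :: complex)"
  proof (rule field_differentiable_bound[OF convex_closed_segment])
    fix z assume "z \<in> closed_segment 0 (1::complex)"
    show "(g has_field_derivative g' z) (at z within closed_segment 0 1)"
      unfolding g_def g'_def
      by (rule has_field_derivative_at_within) (auto intro!: derivative_eq_intros sum.cong simp: mult_ac)
  next
    fix z assume "z \<in> closed_segment 0 (1::complex)"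
    then obtain u where u: "z = of_real u" using cs by auto
    have "g' z = (\<Sum>i\<in>I. b i * (\<i> * of_real (l i)) * cis (l i * u))"
      unfolding g'_def u by (simp add: cis_conv_exp mult_ac)
    thus "norm (g' z) \<le> L * M" using bernstein[OF fin L lb H] by simp
  qed auto
  moreover have "g 1 = (\<Sum>i\<in>I. b i * cis (l i))" by (simp add: g_def cis_conv_exp mult_ac)
  moreover have "g 0 = (\<Sum>i\<in>I. b i)" by (simp add: g_def)
  ultimately show ?thesis by simp
qed


lemma finite_primes_upto: "finite (primes_upto N)"
  unfolding primes_upto_def by auto

lemma pf_sub: "n \<in> {1..N} \<Longrightarrow> prime_factors n \<subseteq> primes_upto N"
  unfolding primes_upto_def
  by (auto intro: order.trans[OF dvd_imp_le] simp: in_prime_factors_iff)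

lemma cis_prod: "finite S \<Longrightarrow> (\<Prod>p\<in>S. cis (f p)) = cis (\<Sum>p\<in>S. f p)"
  by (induction S rule: finite_induct) (auto simp: cis_mult)

definition lamt :: "(nat \<Rightarrow> real) \<Rightarrow> nat \<Rightarrow> real" where
  "lamt t n = (\<Sum>p\<in>prime_factors n. real (multiplicity p n) * t p)"

definition zt :: "nat set \<Rightarrow> (nat \<Rightarrow> complex) \<Rightarrow> (nat \<Rightarrow> real) \<Rightarrow> real \<Rightarrow> nat \<Rightarrow> complex" where
  "zt P z0 t u = (\<lambda>p. if p \<in> P then z0 p * cis (u * t p) else undefined)"

lemma zmon_zt:
  assumes "n \<in> {1..N}"
  shows "zmon (zt (primes_upto N) z0 t u) n = zmon z0 n * cis (lamt t n * u)"
proof -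
  have sub: "prime_factors n \<subseteq> primes_upto N" by (rule pf_sub[OF assms])
  have "zmon (zt (primes_upto N) z0 t u) n = (\<Prod>p\<in>prime_factors n. (z0 p * cis (u * t p)) ^ multiplicity p n)"
    unfolding zmon_def zt_def using sub by (intro prod.cong) auto
  also have "\<dots> = zmon z0 n * (\<Prod>p\<in>prime_factors n. cis (u * t p) ^ multiplicity p n)"
    unfolding zmon_def by (simp add: power_mult_distrib prod.distrib)
  also have "(\<Prod>p\<in>prime_factors n. cis (u * t p) ^ multiplicity p n) = (\<Prod>p\<in>prime_factors n. cis (real (multiplicity p n) * (u * t p)))"
    by (intro prod.cong refl) (rule Complex.DeMoivre)
  also have "(\<Prod>p\<in>prime_factors n. cis (real (multiplicity p n) * (u * t p))) = cis (lamt t n * u)"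
    unfolding lamt_def by (subst cis_prod) (auto simp: sum_distrib_right sum_distrib_left mult_ac)
  finally show ?thesis .
qed

lemma dp_zt:
  "dirichlet_poly N a (zt (primes_upto N) z0 t u) = (\<Sum>n\<in>{1..N}. (a n * zmon z0 n) * cis (lamt t n * u))"
  unfolding dirichlet_poly_def by (intro sum.cong refl) (simp add: zmon_zt mult.assoc)

lemma zt_torus:
  assumes "z0 \<in> torus P"
  shows "zt P z0 t u \<in> torus P"
  using assms unfolding torus_def zt_def by (auto simp: PiE_iff norm_mult extensional_def)

lemma zmon_norm:
  assumes "z \<in> torus (primes_upto N)" "n \<in> {1..N}"
  shows "norm (zmon z n) = 1"
proof -
  have sub: "prime_factors n \<subseteq> primes_upto N" by (rule pf_sub[OF assms(2)])
  have "norm (zmon z n) = (\<Prod>p\<in>prime_factors n. norm (z p) ^ multiplicity p n)"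
    unfolding zmon_def by (simp add: prod_norm[symmetric] norm_power)
  also have "\<dots> = 1" using assms(1) sub unfolding torus_def by (intro prod.neutral) (auto simp: PiE_iff)
  finally show ?thesis .
qed

lemma dp_bound:
  assumes "z \<in> torus (primes_upto N)"
  shows "norm (dirichlet_poly N a z) \<le> (\<Sum>n\<in>{1..N}. norm (a n))"
  unfolding dirichlet_poly_def
  using zmon_norm[OF assms]
  by (intro order.trans[OF norm_sum] sum_mono) (simp add: norm_mult)

lemma ln_factor:
  assumes "n \<ge> 1"
  shows "(\<Sum>p\<in>prime_factors n. real (multiplicity p n) * ln (real p)) = ln (real n)"
proof -
  have e: "n = (\<Prod>p\<in>prime_factors n. p ^ multiplicity p n)" using prime_factorization_nat[of n] assms by simp
  have "real n = real (\<Prod>p\<in>prime_factors n. p ^ multiplicity p n)" using arg_cong[OF e, of real] .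
  also have "\<dots> = (\<Prod>p\<in>prime_factors n. real p ^ multiplicity p n)" by (simp add: of_nat_prod)
  finally have "ln (real n) = ln (\<Prod>p\<in>prime_factors n. real p ^ multiplicity p n)" by simp
  also have "\<dots> = (\<Sum>p\<in>prime_factors n. ln (real p ^ multiplicity p n))"
    by (rule ln_prod) (auto simp: in_prime_factors_iff)
  also have "\<dots> = (\<Sum>p\<in>prime_factors n. real (multiplicity p n) * ln (real p))"
    by (intro sum.cong refl) (simp add: ln_realpow prime_gt_0_nat in_prime_factors_iff)
  finally show ?thesis by simp
qed

lemma lamt_bound:
  assumes N: "N \<ge> 2" and n: "n \<in> {1..N}" and c: "c \<ge> 0"
    and t: "\<And>p. p \<in> primes_upto N \<Longrightarrow> \<bar>t p\<bar> \<le> c * ln (real p) / ln (real N)"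
  shows "\<bar>lamt t n\<bar> \<le> c"
proof -
  have sub: "prime_factors n \<subseteq> primes_upto N" by (rule pf_sub[OF n])
  have lnN: "ln (real N) > 0" using N by simp
  have "\<bar>lamt t n\<bar> \<le> (\<Sum>p\<in>prime_factors n. real (multiplicity p n) * \<bar>t p\<bar>)"
    unfolding lamt_def by (rule order.trans[OF sum_abs]) (simp add: abs_mult)
  also have "\<dots> \<le> (\<Sum>p\<in>prime_factors n. real (multiplicity p n) * (c * ln (real p) / ln (real N)))"
    using sub t by (intro sum_mono mult_left_mono) auto
  also have "\<dots> = c / ln (real N) * (\<Sum>p\<in>prime_factors n. real (multiplicity p n) * ln (real p))"
    by (simp add: sum_distrib_left mult_ac)
  also have "\<dots> = c / ln (real N) * ln (real n)" using n by (simp add: ln_factor)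
  also have "\<dots> \<le> c / ln (real N) * ln (real N)"
    using n c lnN by (intro mult_left_mono) auto
  also have "\<dots> = c" using lnN by simp
  finally show ?thesis .
qed

lemma key_bound:
  assumes N: "N \<ge> 2" and lam: "lam \<le> 1"
    and z0: "z0 \<in> torus (primes_upto N)"
    and mx: "\<And>w. w \<in> torus (primes_upto N) \<Longrightarrow> norm (dirichlet_poly N a w) \<le> norm (dirichlet_poly N a z0)"
    and t: "\<And>p. p \<in> primes_upto N \<Longrightarrow> \<bar>t p\<bar> \<le> (1 - lam) * ln (real p) / ln (real N)"
  shows "norm (dirichlet_poly N a (zt (primes_upto N) z0 t 1)) \<ge> lam * norm (dirichlet_poly N a z0)"
proof -
  define M where "M = norm (dirichlet_poly N a z0)"
  have H: "norm (\<Sum>n\<in>{1..N}. (a n * zmon z0 n) * cis (lamt t n * u)) \<le> M" for u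
    using mx[OF zt_torus[OF z0, of t u]] unfolding M_def dp_zt .
  have lb: "\<bar>lamt t n\<bar> \<le> 1 - lam" if "n \<in> {1..N}" for n
    using lamt_bound[OF N that _ t] lam by auto
  have "norm ((\<Sum>n\<in>{1..N}. (a n * zmon z0 n) * cis (lamt t n)) - (\<Sum>n\<in>{1..N}. a n * zmon z0 n)) \<le> (1 - lam) * M"
    by (rule bernstein_diff[OF _ _ lb H]) (use lam in auto)
  moreover have "(\<Sum>n\<in>{1..N}. (a n * zmon z0 n) * cis (lamt t n)) = dirichlet_poly N a (zt (primes_upto N) z0 t 1)"
    using dp_zt[of N a z0 t 1] by simp
  moreover have "(\<Sum>n\<in>{1..N}. a n * zmon z0 n) = dirichlet_poly N a z0"
    by (simp add: dirichlet_poly_def)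
  ultimately have "norm (dirichlet_poly N a (zt (primes_upto N) z0 t 1) - dirichlet_poly N a z0) \<le> (1 - lam) * M" by simp
  moreover have "M - norm (dirichlet_poly N a (zt (primes_upto N) z0 t 1)) \<le> norm (dirichlet_poly N a (zt (primes_upto N) z0 t 1) - dirichlet_poly N a z0)"
    unfolding M_def by (metis norm_minus_commute norm_triangle_ineq2)
  ultimately show ?thesis unfolding M_def by (simp add: algebra_simps)
qed


lemma card_small_le:
  fixes x :: real assumes "x \<ge> 0"
  shows "real (card {p::nat. p \<ge> 1 \<and> real p < x}) \<le> x"
proof -
  have "{p::nat. p \<ge> 1 \<and> real p < x} \<subseteq> {1..nat \<lfloor>x\<rfloor>}"
    using assms by (auto simp: le_nat_iff le_floor_iff)
  hence "card {p::nat. p \<ge> 1 \<and> real p < x} \<le> card {1..nat \<lfloor>x\<rfloor>}" by (intro card_mono) auto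
  hence "real (card {p::nat. p \<ge> 1 \<and> real p < x}) \<le> real (nat \<lfloor>x\<rfloor>)" by simp
  also have "\<dots> \<le> x" using assms by simp
  finally show ?thesis .
qed

lemma ln_quad_aux:
  fixes L :: real assumes "L > 2"
  shows "ln (L / 2) \<le> exp (L / 6)"
proof -
  have "ln (L/2) \<le> L/2 - 1" using assms by (intro ln_le_minus_one) auto
  also have "\<dots> \<le> 1 + L/6 + (L/6)^2/2"
  proof -
    have "0 \<le> (L - 12)^2 / 72" by simp
    thus ?thesis by (simp add: power2_eq_square field_simps)
  qed
  also have "\<dots> \<le> exp (L/6)" using assms by (intro exp_lower_Taylor_quadratic) auto
  finally show ?thesis .
qed

lemma numeric:
  assumes N: "N \<ge> 2"
  shows "(\<Prod>p\<in>primes_upto N. pi * ln (real p) / ln (real N)) \<ge> exp (- sqrt (real N))"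
proof -
  define L where "L = ln (real N)"
  have L: "L > 0" using N by (simp add: L_def)
  define x where "x = real N powr (1/3)"
  have x: "x > 0" using N by (simp add: x_def)
  define S where "S = {p\<in>primes_upto N. real p < x}"
  define c where "c = min 1 (2 / L)"
  have c: "0 < c" "c \<le> 1" using L by (auto simp: c_def)
  have pi3: "pi \<ge> 3" using pi_gt3 by simp
  have ln2: "pi * ln 2 \<ge> 2"
  proof -
    have "pi * ln (2::real) \<ge> 3 * (2/3)" using pi3 ln2_ge_two_thirds by (intro mult_mono) auto
    thus ?thesis by simp
  qed
  have fac: "pi * ln (real p) / L \<ge> (if p \<in> S then c else 1)" if p: "p \<in> primes_upto N" for p
  proof (cases "p \<in> S")
    case True
    have "p \<ge> 2" using p by (auto simp: primes_upto_def prime_ge_2_nat)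
    hence "ln (real p) \<ge> ln 2" by simp
    hence "pi * ln (real p) \<ge> pi * ln 2" by (intro mult_left_mono) auto
    hence "pi * ln (real p) \<ge> 2" using ln2 by linarith
    hence "pi * ln (real p) / L \<ge> 2 / L" using L by (intro divide_right_mono) auto
    thus ?thesis using True by (auto simp: c_def)
  next
    case False
    hence px: "real p \<ge> x" using p by (auto simp: S_def)
    have p0: "real p > 0" using p by (auto simp: primes_upto_def prime_gt_0_nat)
    have "ln (real p) \<ge> ln x" using px x by simp
    also have "ln x = L / 3" using N by (simp add: x_def L_def ln_powr)
    finally have "pi * ln (real p) \<ge> pi * (L / 3)" by (intro mult_left_mono) auto
    also have "pi * (L/3) \<ge> 3 * (L/3)" using pi3 L by (intro mult_right_mono) auto
    finally have "pi * ln (real p) / L \<ge> 1" using L by (simp add: field_simps)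
    thus ?thesis using False by auto
  qed
  have "(\<Prod>p\<in>primes_upto N. pi * ln (real p) / L) \<ge> (\<Prod>p\<in>primes_upto N. (if p \<in> S then c else 1))"
    using fac c by (intro prod_mono) auto
  also have "(\<Prod>p\<in>primes_upto N. (if p \<in> S then c else 1)) = c ^ card S"
  proof -
    have "S \<subseteq> primes_upto N" by (auto simp: S_def)
    thus ?thesis by (subst prod.If_cases) (auto simp: finite_primes_upto Int_absorb1)
  qed
  finally have P1: "(\<Prod>p\<in>primes_upto N. pi * ln (real p) / L) \<ge> c ^ card S" .
  have cardS: "real (card S) \<le> x"
  proof -
    have "S \<subseteq> {p::nat. p \<ge> 1 \<and> real p < x}"
      by (auto simp: S_def primes_upto_def prime_gt_0_nat Suc_le_eq)
    hence "card S \<le> card {p::nat. p \<ge> 1 \<and> real p < x}"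
    proof (rule card_mono[rotated])
      have "{p::nat. p \<ge> 1 \<and> real p < x} \<subseteq> {..nat \<lceil>x\<rceil>}"
      proof -
        have "p \<le> nat \<lceil>x\<rceil>" if "real p < x" for p :: nat
        proof -
          have "real p \<le> real (nat \<lceil>x\<rceil>)" using that real_nat_ceiling_ge[of x] by linarith
          thus ?thesis by simp
        qed
        thus ?thesis by auto
      qed
      thus "finite {p::nat. p \<ge> 1 \<and> real p < x}" by (rule finite_subset) auto
    qed
    thus ?thesis using card_small_le[of x] x by linarith
  qed
  have "c ^ card S \<ge> exp (- sqrt (real N))"
  proof (cases "c = 1")
    case True
    thus ?thesis by simp
  next
    case False
    hence cL: "c = 2 / L" and L2: "L > 2" using L by (auto simp: c_def min_def split: if_splits)
    have "c ^ card S = c powr real (card S)" using c by (simp add: powr_realpow)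
    also have "\<dots> \<ge> c powr x" using c cardS by (intro powr_mono') auto
    finally have A: "c ^ card S \<ge> c powr x" .
    have "c powr x = exp (- (x * ln (L / 2)))"
      using c L by (simp add: powr_def cL ln_div algebra_simps)
    also have "x * ln (L/2) \<le> x * exp (L/6)" using x ln_quad_aux[OF L2] by (intro mult_left_mono) auto
    hence "exp (- (x * ln (L / 2))) \<ge> exp (- (x * exp (L/6)))" by simp
    also have "x * exp (L/6) = sqrt (real N)"
    proof -
      have "exp (L/6) = real N powr (1/6)" using N by (simp add: L_def powr_def)
      hence "x * exp (L/6) = real N powr (1/3) * real N powr (1/6)" by (simp add: x_def)
      also have "\<dots> = real N powr (1/3 + 1/6)" by (simp only: powr_add)
      also have "\<dots> = sqrt (real N)" by (simp add: powr_half_sqrt)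
      finally show ?thesis .
    qed
    finally show ?thesis using A by simp
  qed
  with P1 show ?thesis by (simp add: L_def)
qed


abbreviation "M01 \<equiv> restrict_space lborel {0..1::real}"

lemma cis_meas: "(\<lambda>t. cis (2 * pi * t)) \<in> measurable M01 borel"
proof -
  have "(\<lambda>t::real. cis (2 * pi * t)) \<in> borel_measurable borel"
    by (intro borel_measurable_continuous_onI continuous_intros)
  hence "(\<lambda>t::real. cis (2 * pi * t)) \<in> borel_measurable lborel" by simp
  thus ?thesis by (rule measurable_restrict_space1)
qed

lemma sets_circle [simp]: "sets circle_measure = sets borel"
  by (simp add: circle_measure_def)

lemma space_circle [simp]: "space circle_measure = UNIV"
  by (simp add: circle_measure_def)

lemma prob_M01: "prob_space M01"
  by (rule prob_space_restrict_space) auto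

lemma prob_circle: "prob_space circle_measure"
  unfolding circle_measure_def
  by (rule prob_space.prob_space_distr[OF prob_M01 cis_meas])

lemma fm01:
  fixes B :: "real set"
  assumes "B \<subseteq> {0..1}" "B \<in> sets lborel"
  shows "B \<in> fmeasurable lborel"
proof -
  have "{0..1::real} \<in> fmeasurable lborel" by (rule fmeasurableI) simp_all
  from fmeasurableI2[OF this assms] show ?thesis .
qed

lemma circle_measure_eq:
  assumes "A \<in> sets borel"
  shows "measure circle_measure A = measure lborel ({t\<in>{0..1}. cis (2 * pi * t) \<in> A})"
    and "{t\<in>{0..1}. cis (2 * pi * t) \<in> A} \<in> sets lborel"
proof -
  have "(\<lambda>t. cis (2 * pi * t)) -` A \<inter> space M01 \<in> sets M01"
    using measurable_sets[OF cis_meas assms] .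
  moreover have eq: "(\<lambda>t. cis (2 * pi * t)) -` A \<inter> space M01 = {t\<in>{0..1}. cis (2 * pi * t) \<in> A}"
    by (auto simp: space_restrict_space)
  ultimately have S: "{t\<in>{0..1}. cis (2 * pi * t) \<in> A} \<in> sets M01" by simp
  thus "{t\<in>{0..1}. cis (2 * pi * t) \<in> A} \<in> sets lborel"
    by (subst (asm) sets_restrict_space_iff) auto
  have "measure circle_measure A = measure M01 ((\<lambda>t. cis (2 * pi * t)) -` A \<inter> space M01)"
    unfolding circle_measure_def by (rule measure_distr[OF cis_meas assms])
  also have "\<dots> = measure lborel ({t\<in>{0..1}. cis (2 * pi * t) \<in> A})"
    unfolding eq by (rule measure_restrict_space) auto
  finally show "measure circle_measure A = measure lborel ({t\<in>{0..1}. cis (2 * pi * t) \<in> A})" .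
qed

lemma cis_periodic: "cis (x - 2 * pi) = cis x"
  by (simp add: complex_eq_iff cos_diff sin_diff)

lemma arc_measure:
  assumes z0: "norm z0 = 1" and d: "0 \<le> d" "d \<le> 1"
  shows "measure circle_measure ((\<lambda>\<theta>. z0 * cis \<theta>) ` {-d..d}) \<ge> d / pi"
    and "(\<lambda>\<theta>. z0 * cis \<theta>) ` {-d..d} \<in> sets borel"
proof -
  define A where "A = (\<lambda>\<theta>. z0 * cis \<theta>) ` {-d..d}"
  have "compact A" unfolding A_def by (intro compact_continuous_image continuous_intros) auto
  hence Ab: "A \<in> sets borel" by (rule borel_compact)
  thus "(\<lambda>\<theta>. z0 * cis \<theta>) ` {-d..d} \<in> sets borel" by (simp add: A_def)
  define S where "S = {t\<in>{0..1}. cis (2 * pi * t) \<in> A}"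
  have mS: "measure circle_measure A = measure lborel S" and sS: "S \<in> sets lborel"
    using circle_measure_eq[OF Ab] by (simp_all add: S_def)
  have fS: "S \<in> fmeasurable lborel" by (rule fm01) (use sS in \<open>auto simp: S_def\<close>)
  define a where "a = Arg z0 / (2 * pi)"
  have z0a: "z0 = cis (2 * pi * a)"
  proof -
    have "z0 \<noteq> 0" using z0 by auto
    hence "cis (Arg z0) = sgn z0" by (rule cis_Arg)
    also have "sgn z0 = z0" using z0 by (simp add: sgn_div_norm)
    finally show ?thesis by (simp add: a_def)
  qed
  have a: "-1/2 < a" "a \<le> 1/2" using Arg_bounded[of z0] pi_gt_zero by (auto simp: a_def field_simps)
  define e where "e = d / (2 * pi)"
  have e: "0 \<le> e" "e < 1/6" using d pi_gt3 by (auto simp: e_def field_simps)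
  have mem1: "t \<in> S" if "t \<in> {0..1}" "t \<in> {a - e..a + e}" for t
  proof -
    define th where "th = 2 * pi * (t - a)"
    have "\<bar>th\<bar> \<le> 2 * pi * e" unfolding th_def using that pi_gt_zero by (auto simp: abs_mult abs_le_iff)
    hence th: "th \<in> {-d..d}" by (auto simp: e_def abs_le_iff)
    have "cis (2 * pi * t) = z0 * cis th" unfolding z0a th_def by (simp add: cis_mult algebra_simps)
    thus ?thesis using that th by (auto simp: S_def A_def)
  qed
  have mem2: "t \<in> S" if "t \<in> {0..1}" "t \<in> {a + 1 - e..a + 1 + e}" for t
  proof -
    define th where "th = 2 * pi * (t - a - 1)"
    have "\<bar>th\<bar> \<le> 2 * pi * e" unfolding th_def using that pi_gt_zero by (auto simp: abs_mult abs_le_iff)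
    hence th: "th \<in> {-d..d}" by (auto simp: e_def abs_le_iff)
    have "z0 * cis th = cis (2 * pi * t - 2 * pi)" unfolding z0a th_def by (simp add: cis_mult algebra_simps)
    hence "cis (2 * pi * t) = z0 * cis th" by (simp add: cis_periodic)
    thus ?thesis using that th by (auto simp: S_def A_def)
  qed
  have "measure lborel S \<ge> 2 * e"
  proof -
    consider "e \<le> a" | "-e \<le> a" "a < e" | "a < -e" by linarith
    thus ?thesis
    proof cases
      case 1
      have sub: "{a - e..a + e} \<subseteq> S" using mem1 1 a e by auto
      have "measure lborel {a - e..a + e} \<le> measure lborel S"
        by (rule measure_mono_fmeasurable[OF sub _ fS]) auto
      thus ?thesis using e by simp
    next
      case 2
      have sub: "{0..a + e} \<union> {a + 1 - e..1} \<subseteq> S" using mem1 mem2 2 a e by auto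
      have f1: "{0..a + e} \<in> fmeasurable lborel" by (rule fm01) (use a e in auto)
      have f2: "{a + 1 - e..1} \<in> fmeasurable lborel" by (rule fm01) (use a e in auto)
      have "measure lborel ({0..a + e} \<union> {a + 1 - e..1}) = measure lborel {0..a + e} + measure lborel ({a + 1 - e..1} - {0..a + e})"
        by (rule measure_Un2[OF f1 f2])
      also have "{a + 1 - e..1} - {0..a + e} = {a + 1 - e..1}" using e by auto
      also have "measure lborel {0..a + e} + measure lborel {a + 1 - e..1} = 2 * e" using 2 e by simp
      finally have "measure lborel ({0..a + e} \<union> {a + 1 - e..1}) = 2 * e" .
      moreover have "measure lborel ({0..a + e} \<union> {a + 1 - e..1}) \<le> measure lborel S"
        by (rule measure_mono_fmeasurable[OF sub _ fS]) auto
      ultimately show ?thesis by simp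
    next
      case 3
      have sub: "{a + 1 - e..a + 1 + e} \<subseteq> S" using mem2 3 a e by auto
      have "measure lborel {a + 1 - e..a + 1 + e} \<le> measure lborel S"
        by (rule measure_mono_fmeasurable[OF sub _ fS]) auto
      thus ?thesis using e by simp
    qed
  qed
  moreover have "2 * e = d / pi" by (simp add: e_def)
  ultimately show "measure circle_measure ((\<lambda>\<theta>. z0 * cis \<theta>) ` {-d..d}) \<ge> d / pi"
    using mS by (simp add: A_def)
qed


lemma cont_coord [continuous_intros]: "continuous_on S (\<lambda>x. x i :: 'b::topological_space)"
  by (rule continuous_on_subset[OF continuous_on_product_coordinates]) auto

lemma torus_eq: "torus P = PiE UNIV (\<lambda>i. if i \<in> P then sphere (0::complex) 1 else {undefined})"
  unfolding torus_def by (auto simp: PiE_iff extensional_def split: if_splits)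

lemma torus_compact: "compact (torus P)"
proof -
  have "compactin (product_topology (\<lambda>_. euclidean) UNIV)
          (PiE UNIV (\<lambda>i. if i \<in> P then sphere (0::complex) 1 else {undefined}))"
    by (subst compactin_PiE) auto
  thus ?thesis unfolding torus_eq euclidean_product_topology by simp
qed

lemma torus_nonempty: "(\<lambda>i. if i \<in> P then 1 else undefined) \<in> torus P"
  unfolding torus_def by (auto simp: PiE_iff extensional_def)

lemma dp_cont: "continuous_on S (\<lambda>z. cmod (dirichlet_poly N a z))"
  unfolding dirichlet_poly_def zmon_def by (intro continuous_intros)

lemma maximizer:
  obtains z0 where "z0 \<in> torus P" "\<And>w. w \<in> torus P \<Longrightarrow> cmod (dirichlet_poly N a w) \<le> cmod (dirichlet_poly N a z0)"
  using continuous_attains_sup[OF torus_compact _ dp_cont] torus_nonempty by blast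


lemma comp_meas:
  assumes "p \<in> P"
  shows "(\<lambda>z. z p) \<in> borel_measurable (PiM P (\<lambda>_. circle_measure))"
proof -
  have "(\<lambda>z. z p) \<in> measurable (PiM P (\<lambda>_. circle_measure)) circle_measure"
    by (rule measurable_component_singleton[OF assms])
  thus ?thesis by (subst measurable_cong_sets[OF refl, of _ circle_measure]) simp_all
qed

lemma dp_meas:
  "(\<lambda>z. dirichlet_poly N a z) \<in> borel_measurable (PiM (primes_upto N) (\<lambda>_. circle_measure))"
  unfolding dirichlet_poly_def zmon_def
proof (intro borel_measurable_sum borel_measurable_times borel_measurable_const borel_measurable_prod borel_measurable_power)
  fix n p assume "n \<in> {1..N}" "p \<in> prime_factors n"
  hence "p \<in> primes_upto N" using pf_sub by blast
  thus "(\<lambda>z. z p) \<in> borel_measurable (PiM (primes_upto N) (\<lambda>_. circle_measure))" by (rule comp_meas)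
qed

theorem theorem3:
  fixes N :: nat and a :: "nat \<Rightarrow> complex" and lam :: real
  assumes "N \<ge> 2" and "0 < lam" and "lam < 1"
  shows "measure (torus_measure (primes_upto N))
           {z \<in> torus (primes_upto N).
              cmod (dirichlet_poly N a z) \<ge>
                lam * (SUP w\<in>torus (primes_upto N). cmod (dirichlet_poly N a w))}
         \<ge> ((1 - lam) / pi\<^sup>2) ^ card (primes_upto N) * exp (- sqrt (real N))"
proof -
  note N = assms(1) and lam = assms(2,3)
  define P where "P = primes_upto N"
  define F where "F z = dirichlet_poly N a z" for z
  obtain z0 where z0: "z0 \<in> torus P" and mx: "\<And>w. w \<in> torus P \<Longrightarrow> cmod (F w) \<le> cmod (F z0)"
    using maximizer[of P N a] unfolding F_def by blast
  define M where "M = cmod (F z0)"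
  have SUPeq: "(SUP w\<in>torus P. cmod (F w)) = M"
    unfolding M_def by (rule cSup_eq_maximum) (use z0 mx in auto)
  define X where "X = {z \<in> torus P. cmod (F z) \<ge> lam * M}"
  have lnN: "ln (real N) > 0" using N by simp
  define d where "d p = (1 - lam) * ln (real p) / ln (real N)" for p :: nat
  have d: "0 \<le> d p" "d p \<le> 1" if "p \<in> P" for p
  proof -
    have p: "2 \<le> p" "p \<le> N" using that by (auto simp: P_def primes_upto_def prime_ge_2_nat)
    have l1: "0 \<le> ln (real p)" using p by simp
    have l2: "ln (real p) \<le> ln (real N)" using p by simp
    show "0 \<le> d p" using lam l1 lnN by (simp add: d_def)
    have "d p \<le> (1 - lam) * ln (real N) / ln (real N)"
      unfolding d_def using lam l2 lnN by (intro divide_right_mono mult_left_mono) auto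
    also have "\<dots> \<le> 1" using lnN lam by simp
    finally show "d p \<le> 1" .
  qed
  have z0n: "norm (z0 p) = 1" if "p \<in> P" for p using z0 that by (auto simp: torus_def PiE_iff)
  define arc where "arc p = (\<lambda>\<theta>. z0 p * cis \<theta>) ` {-d p..d p}" for p
  define B where "B = PiE P arc"
  have BX: "B \<subseteq> X"
  proof
    fix z assume zB: "z \<in> B"
    have "\<forall>p\<in>P. \<exists>th. th \<in> {-d p..d p} \<and> z p = z0 p * cis th"
    proof
      fix p assume "p \<in> P"
      hence "z p \<in> arc p" using zB by (auto simp: B_def PiE_iff)
      thus "\<exists>th. th \<in> {-d p..d p} \<and> z p = z0 p * cis th" unfolding arc_def by blast
    qed
    then obtain t where t: "\<And>p. p \<in> P \<Longrightarrow> t p \<in> {-d p..d p} \<and> z p = z0 p * cis (t p)"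
      by metis
    have zeq: "z = zt P z0 t 1"
    proof
      fix p show "z p = zt P z0 t 1 p"
        using t[of p] zB by (auto simp: zt_def B_def PiE_iff extensional_def)
    qed
    have tb: "\<bar>t p\<bar> \<le> (1 - lam) * ln (real p) / ln (real N)" if "p \<in> primes_upto N" for p
      using t[of p] that by (auto simp: P_def d_def abs_le_iff)
    have "cmod (F z) \<ge> lam * M"
      unfolding zeq M_def F_def P_def
      by (rule key_bound[OF N _ _ _ tb]) (use lam z0 mx in \<open>auto simp: P_def F_def\<close>)
    moreover have "z \<in> torus P" using zeq zt_torus[OF z0] by simp
    ultimately show "z \<in> X" by (simp add: X_def)
  qed
  interpret PP: product_prob_space "\<lambda>_::nat. circle_measure" P
    by (rule product_prob_spaceI) (rule prob_circle)
  have finP: "finite P" by (simp add: P_def finite_primes_upto)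
  have arcs: "arc p \<in> sets circle_measure" if "p \<in> P" for p
    using arc_measure(2)[OF z0n[OF that] d[OF that]] by (simp add: arc_def)
  have arcm: "measure circle_measure (arc p) \<ge> d p / pi" if "p \<in> P" for p
    using arc_measure(1)[OF z0n[OF that] d[OF that]] by (simp add: arc_def)
  have tm: "torus_measure P = PiM P (\<lambda>_. circle_measure)" by (simp add: torus_measure_def)
  have Xs: "X \<in> sets (torus_measure P)"
  proof -
    have fm[measurable]: "(\<lambda>z. F z) \<in> borel_measurable (PiM P (\<lambda>_. circle_measure))"
      unfolding F_def P_def by (rule dp_meas)
    have ts: "torus P \<in> sets (PiM P (\<lambda>_. circle_measure))"
      unfolding torus_def using finP by (intro sets_PiM_I_finite) auto
    have "{z \<in> space (PiM P (\<lambda>_. circle_measure)). lam * M \<le> cmod (F z)} \<in> sets (PiM P (\<lambda>_. circle_measure))"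
      by measurable
    moreover have "X = torus P \<inter> {z \<in> space (PiM P (\<lambda>_. circle_measure)). lam * M \<le> cmod (F z)}"
      using sets.sets_into_space[OF ts] by (auto simp: X_def)
    ultimately show ?thesis using ts tm by auto
  qed
  have "measure (torus_measure P) B \<le> measure (torus_measure P) X"
    unfolding tm using BX Xs tm by (intro PP.finite_measure_mono) auto
  moreover have "measure (torus_measure P) B = (\<Prod>p\<in>P. measure circle_measure (arc p))"
  proof -
    have "emeasure (PiM P (\<lambda>_. circle_measure)) B = (\<Prod>p\<in>P. emeasure circle_measure (arc p))"
      unfolding B_def by (rule PP.emeasure_PiM[OF finP arcs])
    also have "\<dots> = (\<Prod>p\<in>P. ennreal (measure circle_measure (arc p)))"
      by (intro prod.cong refl) (rule finite_measure.emeasure_eq_measure, use prob_circle in \<open>simp add: prob_space_def\<close>)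
    also have "\<dots> = ennreal (\<Prod>p\<in>P. measure circle_measure (arc p))"
      by (rule prod_ennreal) simp
    finally show ?thesis unfolding tm measure_def by (simp add: prod_nonneg)
  qed
  moreover have "(\<Prod>p\<in>P. measure circle_measure (arc p)) \<ge> (\<Prod>p\<in>P. d p / pi)"
    using arcm d by (intro prod_mono) auto
  moreover have "(\<Prod>p\<in>P. d p / pi) = ((1 - lam) / pi\<^sup>2) ^ card P * (\<Prod>p\<in>P. pi * ln (real p) / ln (real N))"
  proof -
    have "(\<Prod>p\<in>P. d p / pi) = (\<Prod>p\<in>P. ((1 - lam) / pi\<^sup>2) * (pi * ln (real p) / ln (real N)))"
    proof (intro prod.cong refl)
      fix p
      have "pi \<noteq> 0" "ln (real N) \<noteq> 0" using lnN by auto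
      thus "d p / pi = ((1 - lam) / pi\<^sup>2) * (pi * ln (real p) / ln (real N))"
        by (simp add: d_def power2_eq_square field_simps)
    qed
    also have "\<dots> = (\<Prod>p\<in>P. ((1 - lam) / pi\<^sup>2)) * (\<Prod>p\<in>P. pi * ln (real p) / ln (real N))"
      by (rule prod.distrib)
    finally show ?thesis by simp
  qed
  moreover have "(\<Prod>p\<in>P. pi * ln (real p) / ln (real N)) \<ge> exp (- sqrt (real N))"
    unfolding P_def by (rule numeric[OF N])
  moreover have "((1 - lam) / pi\<^sup>2) ^ card P \<ge> 0" using lam by simp
  ultimately have "measure (torus_measure P) X \<ge> ((1 - lam) / pi\<^sup>2) ^ card P * exp (- sqrt (real N))"
    by (smt (verit) mult_left_mono)
  thus ?thesis unfolding X_def SUPeq[unfolded F_def P_def] P_def F_def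
    using SUPeq by (simp add: P_def F_def M_def)
qed

end
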